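(* Let $d=2^n$ and let $\mathcal{C}_i$ and $\mathcal{C}_j$ ($i\neq j$) be two disjoint maximal commuting classes of $n$-qubit Pauli operators. Then every operator $U\in\mathcal{C}_i$ commutes with exactly $2^{n-1}-1$ elements of $\mathcal{C}_j$, and this set of $2^{n-1}-1$ elements is unique to $U$: no two distinct elements of $\mathcal{C}_i$ commute with the same set of $2^{n-1}-1$ operators of $\mathcal{C}_j$.
   Context: The $n$-qubit Pauli operators are the $4^n$ tensor products $P_1\otimes\cdots\otimes P_n$ with $P_k\in\{I,X,Y,Z\}$; products are taken up to a phase. A maximal commuting class is a set of $2^n-1$ mutually commuting non-identity $n$-qubit Pauli operators; together with the identity it forms (up to phases) an abelian group generated by $n$ of its elements. *)

theory Defs
  imports Complex_Main
begin

datatype pauli1 = PI | PX | PY | PZ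

fun pmul1 :: "pauli1 \<Rightarrow> pauli1 \<Rightarrow> complex \<times> pauli1" where
  "pmul1 PI q = (1, q)"
| "pmul1 p PI = (1, p)"
| "pmul1 PX PX = (1, PI)"
| "pmul1 PY PY = (1, PI)"
| "pmul1 PZ PZ = (1, PI)"
| "pmul1 PX PY = (\<i>, PZ)"
| "pmul1 PY PX = (-\<i>, PZ)"
| "pmul1 PY PZ = (\<i>, PX)"
| "pmul1 PZ PY = (-\<i>, PX)"
| "pmul1 PZ PX = (\<i>, PY)"
| "pmul1 PX PZ = (-\<i>, PY)"

text \<open>An n-qubit Pauli operator P_1 \<otimes> ... \<otimes> P_n is a list of length n.
  The set of all n-qubit Pauli operators:\<close>
definition paulis :: "nat \<Rightarrow> pauli1 list set" where
  "paulis n = {P. length P = n}"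

definition pauli_id :: "nat \<Rightarrow> pauli1 list" where
  "pauli_id n = replicate n PI"

definition pmul :: "pauli1 list \<Rightarrow> pauli1 list \<Rightarrow> complex \<times> pauli1 list" where
  "pmul P Q = (let r = map2 pmul1 P Q in (prod_list (map fst r), map snd r))"

definition commutes :: "pauli1 list \<Rightarrow> pauli1 list \<Rightarrow> bool" where
  "commutes P Q \<longleftrightarrow> pmul P Q = pmul Q P"

definition max_commuting_class :: "nat \<Rightarrow> pauli1 list set \<Rightarrow> bool" where
  "max_commuting_class n C \<longleftrightarrow>
     C \<subseteq> paulis n \<and> pauli_id n \<notin> C \<and> card C = 2 ^ n - 1 \<and>
     (\<forall>P\<in>C. \<forall>Q\<in>C. commutes P Q)"

end

theory Submission
  imports Defs
begin

definition m1 :: "pauli1 \<Rightarrow> pauli1 \<Rightarrow> pauli1" where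
  "m1 a b = snd (pmul1 a b)"

definition ac1 :: "pauli1 \<Rightarrow> pauli1 \<Rightarrow> bool" where
  "ac1 a b \<longleftrightarrow> a \<noteq> PI \<and> b \<noteq> PI \<and> a \<noteq> b"

definition mul :: "pauli1 list \<Rightarrow> pauli1 list \<Rightarrow> pauli1 list" where
  "mul P Q = map2 m1 P Q"

fun sy :: "pauli1 list \<Rightarrow> pauli1 list \<Rightarrow> bool" where
  "sy (a#P) (b#Q) = (ac1 a b \<noteq> sy P Q)"
| "sy _ _ = False"

lemma m1_comm: "m1 a b = m1 b a" by (cases a; cases b; simp add: m1_def)
lemma m1_assoc: "m1 a (m1 b c) = m1 (m1 a b) c" by (cases a; cases b; cases c; simp add: m1_def)
lemma m1_self: "m1 a a = PI" by (cases a; simp add: m1_def)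
lemma m1_PI: "m1 a PI = a" by (cases a; simp add: m1_def)
lemma m1_eq_PI: "m1 a b = PI \<Longrightarrow> a = b" by (cases a; cases b; simp add: m1_def)
lemma ac1_lin: "ac1 (m1 a b) c = (ac1 a c \<noteq> ac1 b c)"
  by (cases a; cases b; cases c; simp add: m1_def ac1_def)
lemma ac1_sym: "ac1 a b = ac1 b a" by (auto simp: ac1_def)
lemma ac1_self: "\<not> ac1 a a" by (auto simp: ac1_def)
lemma phase1: "fst (pmul1 a b) = (if ac1 a b then -1 else 1) * fst (pmul1 b a)"
  by (cases a; cases b; simp add: ac1_def)
lemma phase1_nz: "fst (pmul1 a b) \<noteq> 0"
  by (cases a; cases b; simp)

lemma pmul_Cons: "pmul (a#P) (b#Q) = (fst (pmul1 a b) * fst (pmul P Q), snd (pmul1 a b) # snd (pmul P Q))"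
  by (simp add: pmul_def Let_def)

lemma pmul_snd: "snd (pmul P Q) = mul P Q"
  by (auto simp: pmul_def Let_def mul_def m1_def split: prod.splits)

lemma mul_Cons[simp]: "mul (a#P) (b#Q) = m1 a b # mul P Q" by (simp add: mul_def)
lemma mul_Nil[simp]: "mul [] Q = []" "mul P [] = []" by (auto simp: mul_def)
lemma length_mul[simp]: "length (mul P Q) = min (length P) (length Q)" by (simp add: mul_def)

lemma mul_comm': "mul P Q = mul Q P"
proof (induction P arbitrary: Q)
  case Nil then show ?case by simp
next
  case (Cons a P) then show ?case by (cases Q) (auto simp: m1_comm)
qed

lemma mul_assoc: "mul P (mul Q R) = mul (mul P Q) R"
proof (induction P arbitrary: Q R)
  case Nil then show ?case by simp
next
  case (Cons a P) then show ?case by (cases Q; cases R) (auto simp: m1_assoc)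
qed

lemma mul_self: "mul P P = replicate (length P) PI"
  by (induction P) (auto simp: m1_self)

lemma mul_id: "length P = n \<Longrightarrow> mul P (replicate n PI) = P"
  by (induction P arbitrary: n) (auto simp: m1_PI)

lemma mul_eq_id: "length P = length Q \<Longrightarrow> mul P Q = replicate (length P) PI \<Longrightarrow> P = Q"
proof (induction P arbitrary: Q)
  case Nil then show ?case by simp
next
  case (Cons a P) then show ?case by (cases Q) (auto dest: m1_eq_PI)
qed

lemma phase_eq: "length P = length Q \<Longrightarrow>
   fst (pmul P Q) = (if sy P Q then -1 else 1) * fst (pmul Q P) \<and> fst (pmul Q P) \<noteq> 0"
proof (induction P arbitrary: Q)
  case Nil then show ?case by (simp add: pmul_def)
next
  case (Cons a P)
  then obtain b Q' where Q: "Q = b # Q'" by (cases Q) auto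
  with Cons have IH: "fst (pmul P Q') = (if sy P Q' then -1 else 1) * fst (pmul Q' P) \<and> fst (pmul Q' P) \<noteq> 0" by simp
  show ?case using IH phase1[of a b] phase1_nz[of b a] by (auto simp: Q pmul_Cons)
qed

lemma commutes_sy: "length P = length Q \<Longrightarrow> commutes P Q \<longleftrightarrow> \<not> sy P Q"
proof -
  assume l: "length P = length Q"
  have s: "snd (pmul P Q) = snd (pmul Q P)" by (simp add: pmul_snd mul_comm')
  from phase_eq[OF l] have "fst (pmul P Q) = (if sy P Q then -1 else 1) * fst (pmul Q P)"
    and nz: "fst (pmul Q P) \<noteq> 0" by auto
  then show ?thesis unfolding commutes_def using s nz
    by (cases "pmul P Q"; cases "pmul Q P") auto
qed

lemma sy_sym: "sy P Q = sy Q P"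
proof (induction P arbitrary: Q)
  case Nil then show ?case by (cases Q) auto
next
  case (Cons a P) then show ?case by (cases Q) (auto simp: ac1_sym)
qed

lemma sy_self: "\<not> sy P P"
  by (induction P) (auto simp: ac1_self)

lemma sy_lin: "length P = length R \<Longrightarrow> length Q = length R \<Longrightarrow> sy (mul P Q) R = (sy P R \<noteq> sy Q R)"
proof (induction P arbitrary: Q R)
  case Nil then show ?case by simp
next
  case (Cons a P) then show ?case by (cases Q; cases R) (auto simp: ac1_lin)
qed

lemma sy_lin2: "length P = length R \<Longrightarrow> length Q = length R \<Longrightarrow> sy R (mul P Q) = (sy R P \<noteq> sy R Q)"
  using sy_lin sy_sym by metis

lemma sy_id: "\<not> sy P (replicate n PI)"
proof (induction P arbitrary: n)
  case Nil then show ?case by simp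
next
  case (Cons a P) then show ?case by (cases n) (auto simp: ac1_def)
qed


lemma mul_id_left: "length x = n \<Longrightarrow> mul (replicate n PI) x = x"
  using mul_id mul_comm' by metis

lemma mul_cancel: "length p = length x \<Longrightarrow> mul p (mul p x) = x"
  by (simp add: mul_assoc mul_self mul_id_left)

definition iso :: "pauli1 list set \<Rightarrow> bool" where
  "iso S \<longleftrightarrow> (\<forall>P\<in>S. \<forall>Q\<in>S. \<not> sy P Q)"

inductive_set gen :: "nat \<Rightarrow> pauli1 list set \<Rightarrow> pauli1 list set" for n S where
  gid: "pauli_id n \<in> gen n S"
| gbase: "P \<in> S \<Longrightarrow> P \<in> gen n S"
| gmul: "P \<in> gen n S \<Longrightarrow> Q \<in> gen n S \<Longrightarrow> mul P Q \<in> gen n S"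

lemma gen_paulis: "S \<subseteq> paulis n \<Longrightarrow> gen n S \<subseteq> paulis n"
proof
  fix x assume S: "S \<subseteq> paulis n" and x: "x \<in> gen n S"
  from x show "x \<in> paulis n"
    by (induction rule: gen.induct) (use S in \<open>auto simp: paulis_def pauli_id_def\<close>)
qed

lemma gen_iso: assumes S: "S \<subseteq> paulis n" and I: "iso S" shows "iso (gen n S)"
proof -
  have G: "gen n S \<subseteq> paulis n" using gen_paulis[OF S] .
  have A: "\<not> sy P Q" if "P \<in> S" "Q \<in> gen n S" for P Q
    using that(2)
  proof (induction rule: gen.induct)
    case gid then show ?case by (simp add: pauli_id_def sy_id)
  next
    case (gbase Q) then show ?case using I \<open>P \<in> S\<close> by (auto simp: iso_def)
  next
    case (gmul Q1 Q2)
    then have "length Q1 = n" "length Q2 = n" "length P = n" using G S \<open>P \<in> S\<close> by (auto simp: paulis_def)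
    then show ?case using gmul sy_lin2 by metis
  qed
  have B: "\<not> sy P Q" if "P \<in> gen n S" "Q \<in> gen n S" for P Q
    using that(1)
  proof (induction rule: gen.induct)
    case gid then show ?case by (simp add: pauli_id_def sy_id sy_sym)
  next
    case (gbase P) then show ?case using A \<open>Q \<in> gen n S\<close> by auto
  next
    case (gmul P1 P2)
    then have "length P1 = n" "length P2 = n" "length Q = n" using G \<open>Q \<in> gen n S\<close> by (auto simp: paulis_def)
    then show ?case using gmul sy_lin by metis
  qed
  show ?thesis using B by (auto simp: iso_def)
qed

lemma UNIV_pauli1: "(UNIV :: pauli1 set) = {PI, PX, PY, PZ}"
  by (auto intro: pauli1.exhaust)

lemma finite_paulis: "finite (paulis n)"
proof -
  have "paulis n = {xs. set xs \<subseteq> UNIV \<and> length xs = n}" by (auto simp: paulis_def)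
  then show ?thesis using finite_lists_length_eq[of "UNIV :: pauli1 set" n] by (simp add: UNIV_pauli1)
qed

lemma half:
  assumes WP: "W \<subseteq> paulis n" and cl: "\<forall>x\<in>W. \<forall>y\<in>W. mul x y \<in> W"
    and lin: "\<forall>x\<in>W. \<forall>y\<in>W. f (mul x y) = (f x \<noteq> f y)"
    and v: "v \<in> W" "f v"
  shows "card W = 2 * card {x\<in>W. \<not> f x}"
proof -
  have fin: "finite W" using WP finite_paulis finite_subset by blast
  have len: "length x = n" if "x \<in> W" for x using that WP by (auto simp: paulis_def)
  have "bij_betw (mul v) {x\<in>W. \<not> f x} {x\<in>W. f x}"
  proof (rule bij_betw_byWitness[where f' = "mul v"])
    show "\<forall>a\<in>{x \<in> W. \<not> f x}. mul v (mul v a) = a" using len v by (auto intro: mul_cancel)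
    show "\<forall>a'\<in>{x \<in> W. f x}. mul v (mul v a') = a'" using len v by (auto intro: mul_cancel)
    show "mul v ` {x \<in> W. \<not> f x} \<subseteq> {x \<in> W. f x}" using cl lin v by auto
    show "mul v ` {x \<in> W. f x} \<subseteq> {x \<in> W. \<not> f x}" using cl lin v by auto
  qed
  then have c: "card {x\<in>W. \<not> f x} = card {x\<in>W. f x}" by (rule bij_betw_same_card)
  have "W = {x\<in>W. f x} \<union> {x\<in>W. \<not> f x}" by auto
  then have "card W = card {x\<in>W. f x} + card {x\<in>W. \<not> f x}"
    using fin by (metis (no_types, lifting) card_Un_disjoint disjoint_iff finite_Un mem_Collect_eq)
  then show ?thesis using c by simp
qed

lemma half_le:
  assumes WP: "W \<subseteq> paulis n" and cl: "\<forall>x\<in>W. \<forall>y\<in>W. mul x y \<in> W"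
    and lin: "\<forall>x\<in>W. \<forall>y\<in>W. f (mul x y) = (f x \<noteq> f y)"
  shows "card W \<le> 2 * card {x\<in>W. \<not> f x}"
proof (cases "\<exists>v\<in>W. f v")
  case True then show ?thesis using half[OF WP cl lin] by force
next
  case False
  then have "{x\<in>W. \<not> f x} = W" by auto
  then show ?thesis by simp
qed


lemma hx_lin: "(m1 a b \<in> {PX,PY}) = ((a \<in> {PX,PY}) \<noteq> (b \<in> {PX,PY}))"
  by (cases a; cases b; simp add: m1_def)
lemma hz_lin: "(m1 a b \<in> {PZ,PY}) = ((a \<in> {PZ,PY}) \<noteq> (b \<in> {PZ,PY}))"
  by (cases a; cases b; simp add: m1_def)

lemma hd_mul: "x \<noteq> [] \<Longrightarrow> y \<noteq> [] \<Longrightarrow> hd (mul x y) = m1 (hd x) (hd y)"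
  by (cases x; cases y) auto
lemma tl_mul: "tl (mul x y) = mul (tl x) (tl y)"
  by (cases x; cases y) auto

lemma K: "S \<subseteq> paulis n \<Longrightarrow> iso S \<Longrightarrow> card S \<le> 2 ^ n"
proof (induction n arbitrary: S)
  case 0
  have "paulis 0 = {[]}" by (auto simp: paulis_def)
  then have "S \<subseteq> {[]}" using 0 by simp
  then have "card S \<le> card {[] :: pauli1 list}" by (intro card_mono) auto
  then show ?case by simp
next
  case (Suc n)
  define W where "W = gen (Suc n) S"
  have WP: "W \<subseteq> paulis (Suc n)" unfolding W_def using gen_paulis Suc.prems by blast
  have Wiso: "iso W" unfolding W_def using gen_iso Suc.prems by blast
  have Wfin: "finite W" using WP finite_paulis finite_subset by blast
  have Wcl: "\<forall>x\<in>W. \<forall>y\<in>W. mul x y \<in> W" unfolding W_def by (auto intro: gen.gmul)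
  have Wid: "pauli_id (Suc n) \<in> W" unfolding W_def by (rule gen.gid)
  have SW: "card S \<le> card W" using Wfin unfolding W_def by (meson card_mono gen.gbase subsetI)
  have len: "length x = Suc n" if "x \<in> W" for x using that WP by (auto simp: paulis_def)
  have ne: "x \<noteq> []" if "x \<in> W" for x using len[OF that] by auto
  define fx where "fx P = (hd P \<in> {PX,PY})" for P
  define fz where "fz P = (hd P \<in> {PZ,PY})" for P
  have fxl: "\<forall>x\<in>W. \<forall>y\<in>W. fx (mul x y) = (fx x \<noteq> fx y)"
    using ne hd_mul hx_lin unfolding fx_def by metis
  have fzl: "\<forall>x\<in>W. \<forall>y\<in>W. fz (mul x y) = (fz x \<noteq> fz y)"
    using ne hd_mul hz_lin unfolding fz_def by metis
  define W1 where "W1 = {x\<in>W. \<not> fx x}"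
  define W0 where "W0 = {x\<in>W1. \<not> fz x}"
  have W1P: "W1 \<subseteq> paulis (Suc n)" using WP W1_def by auto
  have W1cl: "\<forall>x\<in>W1. \<forall>y\<in>W1. mul x y \<in> W1" using Wcl fxl W1_def by auto
  have c1: "card W \<le> 2 * card W1" unfolding W1_def by (rule half_le[OF WP Wcl fxl])
  have c2: "card W1 \<le> 2 * card W0" unfolding W0_def
    by (rule half_le[OF W1P W1cl]) (use fzl W1_def in auto)
  have W0cl: "\<forall>x\<in>W0. \<forall>y\<in>W0. mul x y \<in> W0" using W1cl fzl W0_def W1_def by auto
  have W0hd: "x = PI # tl x" if "x \<in> W0" for x
  proof -
    have "x \<in> W" "\<not> fx x" "\<not> fz x" using that W0_def W1_def by auto
    then show ?thesis using ne[of x] unfolding fx_def fz_def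
      by (cases x; cases "hd x") auto
  qed
  define R where "R = tl ` W0"
  have RP: "R \<subseteq> paulis n" unfolding R_def W0_def W1_def using len by (auto simp: paulis_def)
  have Rin: "PI # r \<in> W0" if "r \<in> R" for r using that W0hd R_def by auto
  have Riso: "iso R" unfolding iso_def
  proof (intro ballI)
    fix r r' assume "r \<in> R" "r' \<in> R"
    then have "PI # r \<in> W" "PI # r' \<in> W" using Rin W0_def W1_def by auto
    then have "\<not> sy (PI # r) (PI # r')" using Wiso iso_def by blast
    then show "\<not> sy r r'" by (simp add: ac1_def)
  qed
  have "inj_on tl W0" using W0hd by (metis inj_onI)
  then have cR: "card W0 = card R" unfolding R_def by (simp add: card_image)
  have IH: "card R \<le> 2 ^ n" using Suc.IH[OF RP Riso] .
  have Rcl: "mul r r' \<in> R" if "r \<in> R" "r' \<in> R" for r r'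
  proof -
    have "mul (PI # r) (PI # r') \<in> W0" using W0cl Rin that by blast
    then have "tl (mul (PI # r) (PI # r')) \<in> R" unfolding R_def by blast
    then show ?thesis by (simp)
  qed
  have "card W \<le> 2 * 2 ^ n"
  proof (cases "\<forall>x\<in>W. \<not> fx x")
    case True
    then have "W1 = W" unfolding W1_def by auto
    then have "card W = card W1" by simp
    then show ?thesis using c2 cR IH by linarith
  next
    case F1: False
    show ?thesis
    proof (cases "\<forall>x\<in>W1. \<not> fz x")
      case True
      then have "W0 = W1" unfolding W0_def by auto
      then have "card W0 = card W1" by simp
      then show ?thesis using c1 cR IH by linarith
    next
      case False
      then obtain Q where Q: "Q \<in> W1" "fz Q" by auto
      from F1 obtain P where P: "P \<in> W" "fx P" by auto
      have QW: "Q \<in> W" using Q W1_def by auto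
      have hQ: "hd Q = PZ" using Q unfolding W1_def fx_def fz_def by auto
      obtain a p where Pe: "P = a # p" using ne[OF P(1)] by (cases P) auto
      obtain q where Qe: "Q = PZ # q" using ne[OF QW] hQ by (cases Q) auto
      have a: "ac1 a PZ" using P Pe unfolding fx_def ac1_def by auto
      have "\<not> sy P Q" using Wiso P QW iso_def by blast
      then have spq: "sy p q" using a Pe Qe by simp
      have lp: "length p = n" using len[OF P(1)] Pe by simp
      have lR: "length r = n" if "r \<in> R" for r using RP that by (auto simp: paulis_def)
      have rp: "\<not> sy r p" if "r \<in> R" for r
      proof -
        have "PI # r \<in> W" using Rin that W0_def W1_def by auto
        then have "\<not> sy (PI # r) P" using Wiso P iso_def by blast
        then show ?thesis using Pe by (simp add: ac1_def)
      qed
      have rq: "\<not> sy r q" if "r \<in> R" for r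
      proof -
        have "PI # r \<in> W" using Rin that W0_def W1_def by auto
        then have "\<not> sy (PI # r) Q" using Wiso QW iso_def by blast
        then show ?thesis using Qe by (simp add: ac1_def)
      qed
      have pR: "p \<notin> R" using rq spq sy_sym by metis
      define T where "T = R \<union> mul p ` R"
      have TP: "T \<subseteq> paulis n" unfolding T_def using RP lp lR by (auto simp: paulis_def)
      have Tiso: "iso T" unfolding iso_def T_def
      proof (intro ballI)
        fix x y assume x: "x \<in> R \<union> mul p ` R" and y: "y \<in> R \<union> mul p ` R"
        show "\<not> sy x y"
        proof (cases "x \<in> R")
          case xR: True
          show ?thesis
          proof (cases "y \<in> R")
            case True then show ?thesis using Riso xR iso_def by blast
          next
            case False
            then obtain r' where "r' \<in> R" "y = mul p r'" using y by auto
            then show ?thesis using sy_lin2[of p x r'] lp lR xR rp Riso iso_def by auto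
          qed
        next
          case False
          then obtain r where r: "r \<in> R" "x = mul p r" using x by auto
          show ?thesis
          proof (cases "y \<in> R")
            case True then show ?thesis
              using sy_lin[of p y r] r lp lR rp Riso iso_def sy_sym by metis
          next
            case False
            then obtain r' where r': "r' \<in> R" "y = mul p r'" using y by auto
            have l: "length (mul p r') = n" using lp lR r' by simp
            have "sy (mul p r) y = (sy p y \<noteq> sy r y)" using sy_lin[of p y r] r lp l r' lR by simp
            moreover have "sy p y = (sy p p \<noteq> sy p r')" using sy_lin2[of p p r'] r' lp lR by simp
            moreover have "sy r y = (sy r p \<noteq> sy r r')" using sy_lin2[of p r r'] r r' lp lR by simp
            ultimately show ?thesis using r r' sy_self rp sy_sym Riso iso_def by metis
          qed
        qed
      qed
      have disj: "R \<inter> mul p ` R = {}"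
      proof (rule ccontr)
        assume "R \<inter> mul p ` R \<noteq> {}"
        then obtain r r' where "r \<in> R" "r' \<in> R" "r = mul p r'" by auto
        then have "mul r' r = p" using mul_cancel lp lR mul_comm' by metis
        then show False using Rcl pR \<open>r \<in> R\<close> \<open>r' \<in> R\<close> by blast
      qed
      have "inj_on (mul p) R" by (rule inj_onI) (metis mul_cancel lp lR)
      then have "card (mul p ` R) = card R" by (simp add: card_image)
      moreover have "finite R" using RP finite_paulis finite_subset by blast
      ultimately have "card T = 2 * card R" unfolding T_def using disj by (simp add: card_Un_disjoint)
      moreover have "card T \<le> 2 ^ n" using Suc.IH[OF TP Tiso] .
      ultimately show ?thesis using c1 c2 cR by linarith
    qed
  qed
  then show ?case using SW by simp
qed


lemma class_props:
  assumes M: "max_commuting_class n C"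
  shows "insert (pauli_id n) C \<subseteq> paulis n" "iso (insert (pauli_id n) C)"
    "card (insert (pauli_id n) C) = 2 ^ n"
    "\<forall>x\<in>insert (pauli_id n) C. \<forall>y\<in>insert (pauli_id n) C. mul x y \<in> insert (pauli_id n) C"
    "pauli_id n \<notin> C" "finite C"
proof -
  let ?L = "insert (pauli_id n) C"
  have CP: "C \<subseteq> paulis n" and nid: "pauli_id n \<notin> C" and cC: "card C = 2 ^ n - 1"
    and cm: "\<forall>P\<in>C. \<forall>Q\<in>C. commutes P Q" using M by (auto simp: max_commuting_class_def)
  show LP: "?L \<subseteq> paulis n" using CP by (auto simp: paulis_def pauli_id_def)
  show "pauli_id n \<notin> C" by (rule nid)
  show finC: "finite C" using CP finite_paulis finite_subset by blast
  have len: "length P = n" if "P \<in> ?L" for P using LP that by (auto simp: paulis_def)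
  show Liso: "iso ?L" unfolding iso_def
  proof (intro ballI)
    fix P Q assume P: "P \<in> ?L" and Q: "Q \<in> ?L"
    show "\<not> sy P Q"
    proof (cases "P = pauli_id n \<or> Q = pauli_id n")
      case True then show ?thesis using sy_id sy_sym unfolding pauli_id_def by metis
    next
      case False
      then have "P \<in> C" "Q \<in> C" using P Q by auto
      then show ?thesis using cm commutes_sy len P Q by metis
    qed
  qed
  have p: "(2::nat) ^ n \<ge> 1" by simp
  show cL: "card ?L = 2 ^ n" using finC nid cC p by simp
  let ?G = "gen n ?L"
  have GP: "?G \<subseteq> paulis n" using gen_paulis[OF LP] .
  have "card ?G \<le> 2 ^ n" using K[OF GP gen_iso[OF LP Liso]] .
  moreover have "?L \<subseteq> ?G" by (auto intro: gen.gbase)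
  moreover have "finite ?G" using GP finite_paulis finite_subset by blast
  ultimately have "?L = ?G" using cL card_seteq by metis
  then show "\<forall>x\<in>?L. \<forall>y\<in>?L. mul x y \<in> ?L" by (metis gen.gmul)
qed

lemma selfdual:
  assumes M: "max_commuting_class n C" and x: "x \<in> paulis n"
    and c: "\<forall>y\<in>insert (pauli_id n) C. \<not> sy x y"
  shows "x \<in> insert (pauli_id n) C"
proof (rule ccontr)
  let ?L = "insert (pauli_id n) C"
  assume nx: "x \<notin> ?L"
  have P: "insert x ?L \<subseteq> paulis n" using class_props(1)[OF M] x by auto
  have "iso (insert x ?L)" using class_props(2)[OF M] c sy_self sy_sym unfolding iso_def by auto
  then have "card (insert x ?L) \<le> 2 ^ n" using K P by blast
  moreover have "finite ?L" using class_props(6)[OF M] by simp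
  ultimately show False using nx class_props(3)[OF M] by simp
qed

theorem lemma3:
  fixes n :: nat and Ci Cj :: "pauli1 list set"
  assumes "max_commuting_class n Ci" and "max_commuting_class n Cj"
    and "Ci \<inter> Cj = {}"
  shows "(\<forall>U\<in>Ci. card {V\<in>Cj. commutes U V} = 2 ^ (n - 1) - 1)
       \<and> inj_on (\<lambda>U. {V\<in>Cj. commutes U V}) Ci"
proof -
  note Mi = assms(1) and Mj = assms(2) and dis = assms(3)
  define L1 where "L1 = insert (pauli_id n) Ci"
  define L2 where "L2 = insert (pauli_id n) Cj"
  have L1P: "L1 \<subseteq> paulis n" and L2P: "L2 \<subseteq> paulis n"
    using class_props(1)[OF Mi] class_props(1)[OF Mj] L1_def L2_def by auto
  have L1cl: "\<forall>x\<in>L1. \<forall>y\<in>L1. mul x y \<in> L1" using class_props(4)[OF Mi] L1_def by simp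
  have L2cl: "\<forall>x\<in>L2. \<forall>y\<in>L2. mul x y \<in> L2" using class_props(4)[OF Mj] L2_def by simp
  have cL2: "card L2 = 2 ^ n" using class_props(3)[OF Mj] L2_def by simp
  have nidi: "pauli_id n \<notin> Ci" and nidj: "pauli_id n \<notin> Cj"
    using class_props(5)[OF Mi] class_props(5)[OF Mj] by auto
  have len1: "length x = n" if "x \<in> L1" for x using that L1P by (auto simp: paulis_def)
  have len2: "length x = n" if "x \<in> L2" for x using that L2P by (auto simp: paulis_def)
  have setq: "{V\<in>Cj. commutes U V} = {V\<in>L2. \<not> sy U V} - {pauli_id n}" if U: "U \<in> Ci" for U
  proof -
    have "U \<in> L1" using U L1_def by simp
    then have lU: "length U = n" by (rule len1)
    show ?thesis using nidj lU len2 commutes_sy unfolding L2_def by fastforce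
  qed
  have part1: "card {V\<in>Cj. commutes U V} = 2 ^ (n - 1) - 1" if U: "U \<in> Ci" for U
  proof -
    have lU: "length U = n" using U L1_def len1 by simp
    have lin: "\<forall>x\<in>L2. \<forall>y\<in>L2. sy U (mul x y) = (sy U x \<noteq> sy U y)"
      using sy_lin2 lU len2 by metis
    have "\<exists>v\<in>L2. sy U v"
    proof (rule ccontr)
      assume "\<not> (\<exists>v\<in>L2. sy U v)"
      then have "U \<in> L2" using selfdual[OF Mj, of U] lU L2_def by (auto simp: paulis_def)
      then show False using U dis nidi L2_def by auto
    qed
    then obtain v where v: "v \<in> L2" "sy U v" by blast
    have h: "card L2 = 2 * card {V\<in>L2. \<not> sy U V}" by (rule half[OF L2P L2cl lin v])
    have n1: "n \<ge> 1"
    proof (rule ccontr)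
      assume "\<not> n \<ge> 1"
      then have "n = 0" by simp
      then have "card Ci = 0" using Mi by (simp add: max_commuting_class_def)
      then show False using U class_props(6)[OF Mi] by auto
    qed
    then have "(2::nat) ^ n = 2 * 2 ^ (n - 1)" by (cases n) auto
    then have ck: "card {V\<in>L2. \<not> sy U V} = 2 ^ (n - 1)" using h cL2 by simp
    have idin: "pauli_id n \<in> {V\<in>L2. \<not> sy U V}" using L2_def sy_id unfolding pauli_id_def by auto
    have "finite {V\<in>L2. \<not> sy U V}" using L2P finite_paulis finite_subset by (metis (no_types, lifting) mem_Collect_eq subset_iff)
    then show ?thesis using setq[OF U] ck idin by (simp add: card_Diff_singleton)
  qed
  have part2: "inj_on (\<lambda>U. {V\<in>Cj. commutes U V}) Ci"
  proof (rule inj_onI)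
    fix U U' assume U: "U \<in> Ci" and U': "U' \<in> Ci"
      and eq: "{V\<in>Cj. commutes U V} = {V\<in>Cj. commutes U' V}"
    have lU: "length U = n" and lU': "length U' = n" using U U' L1_def len1 by auto
    have e2: "{V\<in>L2. \<not> sy U V} - {pauli_id n} = {V\<in>L2. \<not> sy U' V} - {pauli_id n}"
      using eq setq U U' by metis
    have sv: "\<not> sy (mul U U') V" if V: "V \<in> L2" for V
    proof (cases "V = pauli_id n")
      case True then show ?thesis using sy_id unfolding pauli_id_def by metis
    next
      case False
      then have "sy U V = sy U' V" using e2 V by blast
      then show ?thesis using sy_lin[of U V U'] lU lU' len2 V by simp
    qed
    have mP: "mul U U' \<in> paulis n" using lU lU' by (simp add: paulis_def)
    have m2: "mul U U' \<in> L2" using selfdual[OF Mj mP] sv L2_def by simp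
    have m1: "mul U U' \<in> L1" using L1cl U U' L1_def by simp
    show "U = U'"
    proof (cases "mul U U' = pauli_id n")
      case True then show ?thesis using mul_eq_id lU lU' unfolding pauli_id_def by metis
    next
      case False
      then have "mul U U' \<in> Ci" "mul U U' \<in> Cj" using m1 m2 L1_def L2_def by auto
      then show ?thesis using dis by blast
    qed
  qed
  show ?thesis using part1 part2 by blast
qed

end
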